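(* In $G=GL(\infty,F_2)\ltimes F_2^\infty$, for every nonzero $v\in F_2^\infty$ one has $\mathrm{fpc}(v)=\{e,v\}$.
   Context: For a group $G$ and $g\in G$, $C_G(g)$ is the centralizer of $g$ and $\mathrm{fpc}(g)=\{h\in G:\ \{t^{-1}ht: t\in C_G(g)\}\text{ is finite}\}$. $F_2$ is the field with two elements and $F_2^\infty=\bigoplus_{\mathbb N}F_2$ is the space of finitely supported column vectors, regarded as an abelian group under addition. $GL(\infty,F_2)$ is the group of invertible $\mathbb N\times\mathbb N$ matrices $M$ over $F_2$ with $M_{ij}\neq\delta_{ij}$ for only finitely many $(i,j)$, acting on $F_2^\infty$ by matrix multiplication. $G=GL(\infty,F_2)\ltimes F_2^\infty$ is the semidirect product with $gvg^{-1}=g(v)$. *)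

theory Defs
  imports "HOL-Algebra.Group" "HOL-Library.Z2"
begin

text \<open>F_2 is the field bit from HOL-Library.Z2.  Vectors of F_2^infinity are
  finitely supported functions nat => bit; matrices are nat => nat => bit.\<close>

type_synonym vec2 = "nat \<Rightarrow> bit"
type_synonym mat2 = "nat \<Rightarrow> nat \<Rightarrow> bit"

definition Vfin :: "vec2 set" where
  "Vfin = {v. finite {i. v i \<noteq> 0}}"

definition id_mat :: mat2 where
  "id_mat i j = (if i = j then 1 else 0)"

text \<open>Matrix products; the sums are finite for the matrices/vectors considered
  (finitely many entries differing from the identity, resp. finite support).\<close>
definition mat_mult :: "mat2 \<Rightarrow> mat2 \<Rightarrow> mat2" where
  "mat_mult M N i j = (\<Sum>k\<in>{k. M i k \<noteq> 0}. M i k * N k j)"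

definition mat_vec :: "mat2 \<Rightarrow> vec2 \<Rightarrow> vec2" where
  "mat_vec M v i = (\<Sum>k\<in>{k. v k \<noteq> 0}. M i k * v k)"

definition finitary :: "mat2 \<Rightarrow> bool" where
  "finitary M \<longleftrightarrow> finite {(i, j). M i j \<noteq> id_mat i j}"

definition GLinf :: "mat2 set" where
  "GLinf = {M. finitary M \<and> (\<exists>N. finitary N \<and> mat_mult M N = id_mat \<and> mat_mult N M = id_mat)}"

text \<open>The pair (g, v)
  stands for the group element v g (v in the normal subgroup, g in GL), so that
  (g, v)(h, w) = v g w h = (v + g(w)) (g h) since g w g^{-1} = g(w).\<close>
definition SD :: "(mat2 \<times> vec2) monoid" where
  "SD = \<lparr>carrier = GLinf \<times> Vfin,
         mult = (\<lambda>(g, v) (h, w). (mat_mult g h, (\<lambda>i. v i + mat_vec g w i))),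
         one = (id_mat, (\<lambda>i. 0))\<rparr>"

definition vec_elt :: "vec2 \<Rightarrow> mat2 \<times> vec2" where
  "vec_elt v = (id_mat, v)"

definition centralizer_of :: "('a, 'b) monoid_scheme \<Rightarrow> 'a \<Rightarrow> 'a set" where
  "centralizer_of G g = {t \<in> carrier G. t \<otimes>\<^bsub>G\<^esub> g = g \<otimes>\<^bsub>G\<^esub> t}"

definition fpc :: "('a, 'b) monoid_scheme \<Rightarrow> 'a \<Rightarrow> 'a set" where
  "fpc G g = {h \<in> carrier G.
     finite ((\<lambda>t. inv\<^bsub>G\<^esub> t \<otimes>\<^bsub>G\<^esub> h \<otimes>\<^bsub>G\<^esub> t) ` centralizer_of G g)}"

end

theory Submission
  imports Defs "HOL-Library.Infinite_Set"
begin


declare add_bit_eq_xor[simp del] mult_bit_eq_and[simp del] sum.lessThan_Suc[simp del]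

lemma bit_add_self[simp]: "(x::bit) + x = 0"
  by (cases x) simp_all

lemma bit_cases2: "(x::bit) = 0 \<or> x = 1" by (cases x) simp_all

definition fbound :: "nat \<Rightarrow> mat2 \<Rightarrow> bool" where
  "fbound n M \<longleftrightarrow> (\<forall>i j. (n \<le> i \<or> n \<le> j) \<longrightarrow> M i j = id_mat i j)"

definition vbound :: "nat \<Rightarrow> vec2 \<Rightarrow> bool" where
  "vbound n v \<longleftrightarrow> (\<forall>i. n \<le> i \<longrightarrow> v i = 0)"

lemma fbound_mono: "fbound n M \<Longrightarrow> n \<le> m \<Longrightarrow> fbound m M"
  unfolding fbound_def by auto

lemma vbound_mono: "vbound n M \<Longrightarrow> n \<le> m \<Longrightarrow> vbound m M"
  unfolding vbound_def by auto

lemma finitary_iff: "finitary M \<longleftrightarrow> (\<exists>n. fbound n M)"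
proof
  assume "finitary M"
  then have f: "finite {(i, j). M i j \<noteq> id_mat i j}" by (simp add: finitary_def)
  let ?D = "{(i, j). M i j \<noteq> id_mat i j}"
  have "finite (fst ` ?D \<union> snd ` ?D)" using f by auto
  then obtain n where n: "fst ` ?D \<union> snd ` ?D \<subseteq> {..<n}"
    using finite_nat_bounded by blast
  have "fbound n M"
    unfolding fbound_def
  proof (intro allI impI)
    fix i j assume "n \<le> i \<or> n \<le> j"
    then show "M i j = id_mat i j" using n by (force simp: image_iff)
  qed
  then show "\<exists>n. fbound n M" by blast
next
  assume "\<exists>n. fbound n M"
  then obtain n where n: "fbound n M" by blast
  have "{(i, j). M i j \<noteq> id_mat i j} \<subseteq> {..<n} \<times> {..<n}"
    using n unfolding fbound_def by (auto simp: not_less[symmetric])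
  then show "finitary M" unfolding finitary_def by (rule finite_subset) auto
qed

lemma Vfin_iff: "v \<in> Vfin \<longleftrightarrow> (\<exists>n. vbound n v)"
proof
  assume "v \<in> Vfin"
  then have "finite {i. v i \<noteq> 0}" by (simp add: Vfin_def)
  then obtain n where "{i. v i \<noteq> 0} \<subseteq> {..<n}" using finite_nat_bounded by blast
  then have "vbound n v" unfolding vbound_def by (metis (mono_tags, lifting) lessThan_iff linorder_not_le mem_Collect_eq subset_iff)
  then show "\<exists>n. vbound n v" by blast
next
  assume "\<exists>n. vbound n v"
  then obtain n where n: "vbound n v" by blast
  have "{i. v i \<noteq> 0} \<subseteq> {..<n}" using n unfolding vbound_def by (auto simp: not_less[symmetric])
  then show "v \<in> Vfin" unfolding Vfin_def using finite_subset by blast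
qed

lemma mm_sum:
  assumes "fbound n M" "n \<le> B" "p < B"
  shows "mat_mult M N p q = (\<Sum>l<B. M p l * N l q)"
proof -
  have sub: "{l. M p l \<noteq> 0} \<subseteq> {..<B}"
  proof
    fix l assume "l \<in> {l. M p l \<noteq> 0}"
    then have "M p l \<noteq> 0" by simp
    show "l \<in> {..<B}"
    proof (rule ccontr)
      assume "l \<notin> {..<B}"
      then have "M p l = id_mat p l" using assms unfolding fbound_def by auto
      then show False using \<open>M p l \<noteq> 0\<close> \<open>l \<notin> {..<B}\<close> assms(3) by (auto simp: id_mat_def)
    qed
  qed
  show ?thesis unfolding mat_mult_def
    by (rule sum.mono_neutral_left) (use sub in auto)
qed

lemma mv_sum:
  assumes "vbound n v" "n \<le> B"
  shows "mat_vec M v p = (\<Sum>l<B. M p l * v l)"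
proof -
  have sub: "{l. v l \<noteq> 0} \<subseteq> {..<B}"
  proof
    fix l assume "l \<in> {l. v l \<noteq> 0}"
    then have "\<not> n \<le> l" using assms(1) unfolding vbound_def by auto
    then show "l \<in> {..<B}" using assms(2) by auto
  qed
  show ?thesis unfolding mat_vec_def
    by (rule sum.mono_neutral_left) (use sub in auto)
qed

lemma fbound_id: "fbound 0 id_mat" by (simp add: fbound_def)

lemma id_sum: "p < B \<Longrightarrow> (\<Sum>l<B. id_mat p l * f l) = f p"
proof -
  assume "p < B"
  have e: "(\<lambda>l. id_mat p l * f l) = (\<lambda>l. if p = l then f l else 0)" by (auto simp: id_mat_def)
  show ?thesis using \<open>p < B\<close> by (subst e) simp
qed

lemma id_sum2: "q < B \<Longrightarrow> (\<Sum>l<B. f l * id_mat l q) = f q"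
proof -
  assume "q < B"
  have e: "(\<lambda>l. f l * id_mat l q) = (\<lambda>l. if l = q then f l else 0)" by (auto simp: id_mat_def)
  show ?thesis using \<open>q < B\<close> by (subst e) simp
qed

lemma mm_id_left: "mat_mult id_mat N = N"
proof (intro ext)
  fix p q
  show "mat_mult id_mat N p q = N p q"
    using mm_sum[OF fbound_id, of "Suc p" p N q] id_sum[of p "Suc p"] by simp
qed

lemma mm_id_right: assumes "fbound n M" shows "mat_mult M id_mat = M"
proof (intro ext)
  fix p q
  let ?B = "Suc (max n (max p q))"
  show "mat_mult M id_mat p q = M p q"
    using mm_sum[OF assms, of ?B p id_mat q] id_sum2[of q ?B] by simp
qed

lemma mv_id: assumes "vbound n v" shows "mat_vec id_mat v = v"
proof
  fix p
  let ?B = "Suc (max n p)"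
  show "mat_vec id_mat v p = v p"
    using mv_sum[OF assms, of ?B id_mat p] id_sum[of p ?B] by simp
qed

lemma mv_zero: "mat_vec M (\<lambda>i. 0) = (\<lambda>i. 0)"
  by (rule ext) (simp add: mat_vec_def)

lemma fbound_mult:
  assumes "fbound n M" "fbound n N"
  shows "fbound n (mat_mult M N)"
  unfolding fbound_def
proof (intro allI impI)
  fix i j assume ij: "n \<le> i \<or> n \<le> j"
  let ?B = "Suc (max n (max i j))"
  have e: "mat_mult M N i j = (\<Sum>l<?B. M i l * N l j)"
    by (rule mm_sum[OF assms(1)]) auto
  show "mat_mult M N i j = id_mat i j"
  proof (cases "n \<le> i")
    case True
    then have "\<And>l. M i l = id_mat i l" using assms(1) by (auto simp: fbound_def)
    then have "mat_mult M N i j = N i j" using e id_sum[of i ?B] by simp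
    then show ?thesis using assms(2) True by (simp add: fbound_def)
  next
    case False
    then have "n \<le> j" using ij by auto
    then have "\<And>l. N l j = id_mat l j" using assms(2) by (auto simp: fbound_def)
    then have "mat_mult M N i j = M i j" using e id_sum2[of j ?B] by simp
    then show ?thesis using assms(1) \<open>n \<le> j\<close> by (simp add: fbound_def)
  qed
qed

lemma vbound_mv:
  assumes "fbound n M" "vbound n v"
  shows "vbound n (mat_vec M v)"
  unfolding vbound_def
proof (intro allI impI)
  fix i assume i: "n \<le> i"
  let ?B = "Suc (max n i)"
  have e: "mat_vec M v i = (\<Sum>l<?B. M i l * v l)"
    by (rule mv_sum[OF assms(2)]) auto
  have "\<And>l. M i l = id_mat i l" using assms(1) i by (auto simp: fbound_def)
  then have "mat_vec M v i = v i" using e id_sum[of i ?B] by simp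
  then show "mat_vec M v i = 0" using assms(2) i by (simp add: vbound_def)
qed

lemma mm_assoc:
  assumes "fbound n M" "fbound n N" "fbound n P"
  shows "mat_mult (mat_mult M N) P = mat_mult M (mat_mult N P)"
proof (intro ext)
  fix p q
  let ?B = "Suc (max n p)"
  have MN: "fbound n (mat_mult M N)" by (rule fbound_mult[OF assms(1,2)])
  have "mat_mult (mat_mult M N) P p q = (\<Sum>l<?B. mat_mult M N p l * P l q)"
    by (rule mm_sum[OF MN]) auto
  also have "\<dots> = (\<Sum>l<?B. (\<Sum>k<?B. M p k * N k l) * P l q)"
    by (rule sum.cong[OF refl]) (subst mm_sum[OF assms(1), of ?B], auto)
  also have "\<dots> = (\<Sum>k<?B. M p k * (\<Sum>l<?B. N k l * P l q))"
    unfolding sum_distrib_left sum_distrib_right mult.assoc by (rule sum.swap)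
  also have "\<dots> = (\<Sum>k<?B. M p k * mat_mult N P k q)"
    by (rule sum.cong[OF refl]) (subst mm_sum[OF assms(2), of ?B], auto)
  also have "\<dots> = mat_mult M (mat_mult N P) p q"
    by (rule mm_sum[OF assms(1), symmetric]) auto
  finally show "mat_mult (mat_mult M N) P p q = mat_mult M (mat_mult N P) p q" .
qed

lemma mv_mult:
  assumes "fbound n M" "fbound n N" "vbound n v"
  shows "mat_vec (mat_mult M N) v = mat_vec M (mat_vec N v)"
proof
  fix p
  let ?B = "Suc (max n p)"
  have Nv: "vbound n (mat_vec N v)" by (rule vbound_mv[OF assms(2,3)])
  have "mat_vec (mat_mult M N) v p = (\<Sum>l<?B. mat_mult M N p l * v l)"
    by (rule mv_sum[OF assms(3)]) auto
  also have "\<dots> = (\<Sum>l<?B. (\<Sum>k<?B. M p k * N k l) * v l)"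
    by (rule sum.cong[OF refl]) (subst mm_sum[OF assms(1), of ?B], auto)
  also have "\<dots> = (\<Sum>k<?B. M p k * (\<Sum>l<?B. N k l * v l))"
    unfolding sum_distrib_left sum_distrib_right mult.assoc by (rule sum.swap)
  also have "\<dots> = (\<Sum>k<?B. M p k * mat_vec N v k)"
    by (rule sum.cong[OF refl]) (subst mv_sum[OF assms(3), of ?B], auto)
  also have "\<dots> = mat_vec M (mat_vec N v) p"
    by (rule mv_sum[OF Nv, symmetric]) auto
  finally show "mat_vec (mat_mult M N) v p = mat_vec M (mat_vec N v) p" .
qed

lemma mv_add:
  assumes "vbound n v" "vbound n w"
  shows "mat_vec M (\<lambda>i. v i + w i) = (\<lambda>i. mat_vec M v i + mat_vec M w i)"
proof
  fix p
  have vw: "vbound n (\<lambda>i. v i + w i)" using assms by (simp add: vbound_def)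
  show "mat_vec M (\<lambda>i. v i + w i) p = mat_vec M v p + mat_vec M w p"
    using mv_sum[OF vw, of n M p] mv_sum[OF assms(1), of n M p] mv_sum[OF assms(2), of n M p]
    by (simp add: distrib_left sum.distrib)
qed



lemma carrier_SD: "(g, v) \<in> carrier SD \<longleftrightarrow> g \<in> GLinf \<and> v \<in> Vfin"
  by (simp add: SD_def)

lemma mult_SD: "(g, v) \<otimes>\<^bsub>SD\<^esub> (h, w) = (mat_mult g h, \<lambda>i. v i + mat_vec g w i)"
  by (simp add: SD_def)

lemma one_SD: "\<one>\<^bsub>SD\<^esub> = (id_mat, \<lambda>i. 0)"
  by (simp add: SD_def)

lemma common_bound2:
  assumes "finitary A" "finitary B"
  obtains n where "fbound n A" "fbound n B"
proof -
  obtain a b where "fbound a A" "fbound b B" using assms finitary_iff by blast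
  then show ?thesis using that fbound_mono[of a A "max a b"] fbound_mono[of b B "max a b"] by auto
qed

lemma common_bound4:
  assumes "finitary A" "finitary B" "finitary C" "finitary D"
  obtains n where "fbound n A" "fbound n B" "fbound n C" "fbound n D"
proof -
  obtain a where "fbound a A" using assms(1) finitary_iff by blast
  moreover obtain b where "fbound b B" using assms(2) finitary_iff by blast
  moreover obtain c where "fbound c C" using assms(3) finitary_iff by blast
  moreover obtain d where "fbound d D" using assms(4) finitary_iff by blast
  ultimately show ?thesis using that fbound_mono[of a A "a+b+c+d"]
    fbound_mono[of b B "a+b+c+d"] fbound_mono[of c C "a+b+c+d"]
    fbound_mono[of d D "a+b+c+d"] by auto
qed

lemma finitary_id: "finitary id_mat"
  using finitary_iff fbound_id by blast

lemma GL_finitary: "g \<in> GLinf \<Longrightarrow> finitary g"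
  by (simp add: GLinf_def)

lemma GL_mult:
  assumes "g \<in> GLinf" "h \<in> GLinf"
  shows "mat_mult g h \<in> GLinf"
proof -
  obtain g' where g': "finitary g" "finitary g'" "mat_mult g g' = id_mat" "mat_mult g' g = id_mat"
    using assms(1) by (auto simp: GLinf_def)
  obtain h' where h': "finitary h" "finitary h'" "mat_mult h h' = id_mat" "mat_mult h' h = id_mat"
    using assms(2) by (auto simp: GLinf_def)
  obtain n where n: "fbound n g" "fbound n g'" "fbound n h" "fbound n h'"
    using common_bound4[OF g'(1,2) h'(1,2)] by blast
  have f1: "finitary (mat_mult g h)" using fbound_mult[OF n(1,3)] finitary_iff by blast
  have f2: "finitary (mat_mult h' g')" using fbound_mult[OF n(4,2)] finitary_iff by blast
  have "mat_mult (mat_mult g h) (mat_mult h' g') = mat_mult g (mat_mult h (mat_mult h' g'))"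
    using mm_assoc[OF n(1) n(3) fbound_mult[OF n(4,2)]] .
  also have "\<dots> = mat_mult g (mat_mult (mat_mult h h') g')"
    using mm_assoc[OF n(3,4,2)] by simp
  also have "\<dots> = id_mat" using h'(3) g'(3) by (simp add: mm_id_left)
  finally have e1: "mat_mult (mat_mult g h) (mat_mult h' g') = id_mat" .
  have "mat_mult (mat_mult h' g') (mat_mult g h) = mat_mult h' (mat_mult g' (mat_mult g h))"
    using mm_assoc[OF n(4,2) fbound_mult[OF n(1,3)]] .
  also have "\<dots> = mat_mult h' (mat_mult (mat_mult g' g) h)"
    using mm_assoc[OF n(2,1,3)] by simp
  also have "\<dots> = id_mat" using h'(4) g'(4) by (simp add: mm_id_left)
  finally have e2: "mat_mult (mat_mult h' g') (mat_mult g h) = id_mat" .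
  show ?thesis unfolding GLinf_def using f1 f2 e1 e2 by blast
qed

lemma id_GL: "id_mat \<in> GLinf"
  unfolding GLinf_def using finitary_id mm_id_left by blast

lemma Vfin_zero: "(\<lambda>i. 0) \<in> Vfin" by (simp add: Vfin_def)

lemma Vfin_bound: "v \<in> Vfin \<Longrightarrow> fbound n g \<Longrightarrow> \<exists>m. n \<le> m \<and> vbound m v \<and> fbound m g"
proof -
  assume "v \<in> Vfin" "fbound n g"
  then obtain a where "vbound a v" using Vfin_iff by blast
  then show ?thesis using \<open>fbound n g\<close> vbound_mono[of a v "max a n"] fbound_mono[of n g "max a n"]
    by (intro exI[of _ "max a n"]) auto
qed

lemma Vfin_mv: "v \<in> Vfin \<Longrightarrow> finitary g \<Longrightarrow> mat_vec g v \<in> Vfin"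
  by (meson Vfin_bound Vfin_iff finitary_iff vbound_mv)

lemma SD_group: "group SD"
proof (rule groupI)
  fix x y assume xy: "x \<in> carrier SD" "y \<in> carrier SD"
  obtain g v h w where x: "x = (g, v)" and y: "y = (h, w)" by (metis prod.exhaust)
  have "g \<in> GLinf" "v \<in> Vfin" "h \<in> GLinf" "w \<in> Vfin" using xy x y carrier_SD by auto
  moreover have "(\<lambda>i. v i + mat_vec g w i) \<in> Vfin"
  proof -
    have "mat_vec g w \<in> Vfin" using Vfin_mv GL_finitary calculation by blast
    have "{i. v i + mat_vec g w i \<noteq> 0} \<subseteq> {i. v i \<noteq> 0} \<union> {i. mat_vec g w i \<noteq> 0}" by auto
    then show ?thesis using \<open>v \<in> Vfin\<close> \<open>mat_vec g w \<in> Vfin\<close> unfolding Vfin_def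
      using finite_subset by blast
  qed
  ultimately show "x \<otimes>\<^bsub>SD\<^esub> y \<in> carrier SD" using x y by (simp add: mult_SD carrier_SD GL_mult)
next
  show "\<one>\<^bsub>SD\<^esub> \<in> carrier SD" by (simp add: one_SD carrier_SD id_GL Vfin_zero)
next
  fix x y z assume xyz: "x \<in> carrier SD" "y \<in> carrier SD" "z \<in> carrier SD"
  obtain g v h w k u where x: "x = (g, v)" and y: "y = (h, w)" and z: "z = (k, u)" by (metis prod.exhaust)
  have c: "g \<in> GLinf" "v \<in> Vfin" "h \<in> GLinf" "w \<in> Vfin" "k \<in> GLinf" "u \<in> Vfin"
    using xyz x y z carrier_SD by auto
  obtain n0 where n0: "fbound n0 g" "fbound n0 h" "fbound n0 k" "fbound n0 k"
    using common_bound4[OF GL_finitary[OF c(1)] GL_finitary[OF c(3)] GL_finitary[OF c(5)] GL_finitary[OF c(5)]] by blast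
  obtain a where a: "vbound a w" using c Vfin_iff by blast
  obtain b where b: "vbound b u" using c Vfin_iff by blast
  define n where "n = max n0 (max a b)"
  have le: "n0 \<le> n" "a \<le> n" "b \<le> n" unfolding n_def by auto
  have nb: "fbound n g" "fbound n h" "fbound n k" "vbound n w" "vbound n u"
    using fbound_mono[OF n0(1) le(1)] fbound_mono[OF n0(2) le(1)] fbound_mono[OF n0(3) le(1)]
      vbound_mono[OF a le(2)] vbound_mono[OF b le(3)] by auto
  have hu: "vbound n (mat_vec h u)" by (rule vbound_mv[OF nb(2,5)])
  have "mat_vec g (\<lambda>i. w i + mat_vec h u i) = (\<lambda>i. mat_vec g w i + mat_vec g (mat_vec h u) i)"
    by (rule mv_add[OF nb(4) hu])
  moreover have "mat_vec (mat_mult g h) u = mat_vec g (mat_vec h u)" by (rule mv_mult[OF nb(1,2,5)])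
  ultimately show "x \<otimes>\<^bsub>SD\<^esub> y \<otimes>\<^bsub>SD\<^esub> z = x \<otimes>\<^bsub>SD\<^esub> (y \<otimes>\<^bsub>SD\<^esub> z)"
    using x y z by (simp add: mult_SD mm_assoc[OF nb(1,2,3)] add.assoc)
next
  fix x assume xc: "x \<in> carrier SD"
  obtain g v where x: "x = (g, v)" by (metis prod.exhaust)
  have c: "g \<in> GLinf" "v \<in> Vfin" using xc x carrier_SD by auto
  obtain a where a: "vbound a v" using c Vfin_iff by blast
  show "\<one>\<^bsub>SD\<^esub> \<otimes>\<^bsub>SD\<^esub> x = x" using x by (simp add: one_SD mult_SD mm_id_left mv_id[OF a])
next
  fix x assume xc: "x \<in> carrier SD"
  obtain g v where x: "x = (g, v)" by (metis prod.exhaust)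
  have c: "g \<in> GLinf" "v \<in> Vfin" using xc x carrier_SD by auto
  obtain g' where g': "finitary g" "finitary g'" "mat_mult g g' = id_mat" "mat_mult g' g = id_mat"
    using c(1) by (auto simp: GLinf_def)
  have "g' \<in> GLinf" unfolding GLinf_def using g' by blast
  moreover have "mat_vec g' v \<in> Vfin" using Vfin_mv c g' by blast
  moreover have "(g', mat_vec g' v) \<otimes>\<^bsub>SD\<^esub> x = \<one>\<^bsub>SD\<^esub>"
    using x g' by (simp add: mult_SD one_SD)
  ultimately show "\<exists>y\<in>carrier SD. y \<otimes>\<^bsub>SD\<^esub> x = \<one>\<^bsub>SD\<^esub>" by (metis carrier_SD)
qed



lemma bit_if_mult1: "(if P then 1 else 0) * (x::bit) = (if P then x else 0)" by simp
lemma bit_if_mult2: "(x::bit) * (if P then 1 else 0) = (if P then x else 0)" by simp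

definition Emat :: "nat \<Rightarrow> nat \<Rightarrow> mat2" where
  "Emat j k p q = id_mat p q + (if p = j \<and> q = k then 1 else 0)"

lemma Emat_fbound: "j \<noteq> k \<Longrightarrow> fbound (Suc (max j k)) (Emat j k)"
  by (auto simp: fbound_def Emat_def)

lemma Emat_left:
  assumes "j \<noteq> k"
  shows "mat_mult (Emat j k) M p q = M p q + (if p = j then M k q else 0)"
proof -
  let ?B = "Suc (max (max j k) p)"
  have "mat_mult (Emat j k) M p q = (\<Sum>l<?B. Emat j k p l * M l q)"
    by (rule mm_sum[OF Emat_fbound[OF assms]]) auto
  also have "\<dots> = (\<Sum>l<?B. id_mat p l * M l q) + (\<Sum>l<?B. (if p = j \<and> l = k then M l q else 0))"
    by (simp add: Emat_def distrib_right sum.distrib bit_if_mult1 del: bit_not_zero_iff)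
  also have "\<dots> = M p q + (if p = j then M k q else 0)"
    by (cases "p = j") (simp_all add: id_sum less_Suc_eq_le)
  finally show ?thesis .
qed

lemma Emat_right:
  assumes "j \<noteq> k" "fbound n M"
  shows "mat_mult M (Emat j k) p q = M p q + (if q = k then M p j else 0)"
proof -
  let ?B = "Suc (max (max n p) (max j (max k q)))"
  have "mat_mult M (Emat j k) p q = (\<Sum>l<?B. M p l * Emat j k l q)"
    by (rule mm_sum[OF assms(2)]) auto
  also have "\<dots> = (\<Sum>l<?B. M p l * id_mat l q) + (\<Sum>l<?B. (if l = j \<and> q = k then M p l else 0))"
    by (simp add: Emat_def distrib_left sum.distrib bit_if_mult2 del: bit_not_zero_iff)
  also have "\<dots> = M p q + (if q = k then M p j else 0)"
    by (cases "q = k") (simp_all add: id_sum2 less_Suc_eq_le le_max_iff_disj)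
  finally show ?thesis .
qed

lemma Emat_mv:
  assumes "j \<noteq> k" "vbound n x"
  shows "mat_vec (Emat j k) x p = x p + (if p = j then x k else 0)"
proof -
  let ?B = "Suc (max (max n p) (max j k))"
  have "mat_vec (Emat j k) x p = (\<Sum>l<?B. Emat j k p l * x l)"
    by (rule mv_sum[OF assms(2)]) auto
  also have "\<dots> = (\<Sum>l<?B. id_mat p l * x l) + (\<Sum>l<?B. (if p = j \<and> l = k then x l else 0))"
    by (simp add: Emat_def distrib_right sum.distrib bit_if_mult1 del: bit_not_zero_iff)
  also have "\<dots> = x p + (if p = j then x k else 0)"
    by (cases "p = j") (simp_all add: id_sum less_Suc_eq_le le_max_iff_disj)
  finally show ?thesis .
qed

lemma Emat_sq: "j \<noteq> k \<Longrightarrow> mat_mult (Emat j k) (Emat j k) = id_mat"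
  by (intro ext) (auto simp: Emat_left Emat_def id_mat_def)

lemma Emat_GL: "j \<noteq> k \<Longrightarrow> Emat j k \<in> GLinf"
  unfolding GLinf_def using Emat_sq Emat_fbound finitary_iff by blast

definition Fmat :: "nat set \<Rightarrow> nat \<Rightarrow> mat2" where
  "Fmat S k p q = id_mat p q + (if p = k \<and> q \<in> S then 1 else 0)"

lemma Fmat_fbound: "S \<subseteq> {..<m} \<Longrightarrow> fbound (max m (Suc k)) (Fmat S k)"
  by (auto simp: fbound_def Fmat_def)

lemma sum_if_in: "finite (S::nat set) \<Longrightarrow> S \<subseteq> {..<m} \<Longrightarrow> m \<le> B \<Longrightarrow> (\<Sum>l<B. (if l \<in> S then f l else 0)) = (\<Sum>l\<in>S. f l)"
proof -
  assume a: "finite S" "S \<subseteq> {..<m}" "m \<le> B"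
  have "(\<Sum>l<B. (if l \<in> S then f l else 0)) = sum f ({..<B} \<inter> S)"
    by (rule sum.inter_restrict[symmetric]) simp
  also have "{..<B} \<inter> S = S" using a by auto
  finally show ?thesis .
qed

lemma Fmat_left:
  assumes "S \<subseteq> {..<m}"
  shows "mat_mult (Fmat S k) M p q = M p q + (if p = k then (\<Sum>s\<in>S. M s q) else 0)"
proof -
  let ?B = "Suc (max (max m k) p)"
  have fS: "finite S" using assms finite_subset by blast
  have SB: "S \<subseteq> {..<?B}" using assms by auto
  have "mat_mult (Fmat S k) M p q = (\<Sum>l<?B. Fmat S k p l * M l q)"
    by (rule mm_sum[OF Fmat_fbound[OF assms]]) auto
  also have "\<dots> = (\<Sum>l<?B. id_mat p l * M l q) + (\<Sum>l<?B. (if p = k \<and> l \<in> S then M l q else 0))"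
    by (simp add: Fmat_def distrib_right sum.distrib bit_if_mult1 del: bit_not_zero_iff)
  also have "\<dots> = M p q + (if p = k then (\<Sum>s\<in>S. M s q) else 0)"
    by (cases "p = k") (simp_all add: id_sum sum_if_in[OF fS assms(1)] le_max_iff_disj)
  finally show ?thesis .
qed

lemma Fmat_mv:
  assumes "S \<subseteq> {..<m}" "vbound n x"
  shows "mat_vec (Fmat S k) x p = x p + (if p = k then (\<Sum>s\<in>S. x s) else 0)"
proof -
  let ?B = "Suc (max (max m k) (max n p))"
  have fS: "finite S" using assms finite_subset by blast
  have SB: "S \<subseteq> {..<?B}" using assms by auto
  have "mat_vec (Fmat S k) x p = (\<Sum>l<?B. Fmat S k p l * x l)"
    by (rule mv_sum[OF assms(2)]) auto
  also have "\<dots> = (\<Sum>l<?B. id_mat p l * x l) + (\<Sum>l<?B. (if p = k \<and> l \<in> S then x l else 0))"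
    by (simp add: Fmat_def distrib_right sum.distrib bit_if_mult1 del: bit_not_zero_iff)
  also have "\<dots> = x p + (if p = k then (\<Sum>s\<in>S. x s) else 0)"
    by (cases "p = k") (simp_all add: id_sum sum_if_in[OF fS assms(1)] le_max_iff_disj)
  finally show ?thesis .
qed

lemma Fmat_sq:
  assumes "S \<subseteq> {..<m}" "k \<notin> S"
  shows "mat_mult (Fmat S k) (Fmat S k) = id_mat"
proof (intro ext)
  fix p q
  have fS: "finite S" using assms finite_subset by blast
  have "(\<Sum>s\<in>S. Fmat S k s q) = (\<Sum>s\<in>S. if s = q then 1 else 0)"
    using assms(2) by (intro sum.cong) (auto simp: Fmat_def id_mat_def)
  also have "\<dots> = (if q \<in> S then 1 else 0)" using fS by simp
  finally have e: "(\<Sum>s\<in>S. Fmat S k s q) = (if q \<in> S then 1 else 0)" .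
  show "mat_mult (Fmat S k) (Fmat S k) p q = id_mat p q"
    by (simp add: Fmat_left[OF assms(1)] e) (auto simp: Fmat_def)
qed

lemma Fmat_GL: "S \<subseteq> {..<m} \<Longrightarrow> k \<notin> S \<Longrightarrow> Fmat S k \<in> GLinf"
  unfolding GLinf_def using Fmat_sq Fmat_fbound finitary_iff by blast



lemma not_fpc:
  assumes h: "h \<in> carrier SD"
  and T: "\<And>k. (N::nat) \<le> k \<Longrightarrow> T k \<in> centralizer_of SD g"
  and TT: "\<And>k. N \<le> k \<Longrightarrow> T k \<otimes>\<^bsub>SD\<^esub> T k = \<one>\<^bsub>SD\<^esub>"
  and inj: "inj_on (\<lambda>k. T k \<otimes>\<^bsub>SD\<^esub> h \<otimes>\<^bsub>SD\<^esub> T k) {N..}"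
  shows "h \<notin> fpc SD g"
proof
  assume "h \<in> fpc SD g"
  then have fin: "finite ((\<lambda>t. inv\<^bsub>SD\<^esub> t \<otimes>\<^bsub>SD\<^esub> h \<otimes>\<^bsub>SD\<^esub> t) ` centralizer_of SD g)"
    by (simp add: fpc_def)
  interpret G: group SD by (rule SD_group)
  have "(\<lambda>k. T k \<otimes>\<^bsub>SD\<^esub> h \<otimes>\<^bsub>SD\<^esub> T k) ` {N..} \<subseteq> (\<lambda>t. inv\<^bsub>SD\<^esub> t \<otimes>\<^bsub>SD\<^esub> h \<otimes>\<^bsub>SD\<^esub> t) ` centralizer_of SD g"
  proof
    fix x assume "x \<in> (\<lambda>k. T k \<otimes>\<^bsub>SD\<^esub> h \<otimes>\<^bsub>SD\<^esub> T k) ` {N..}"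
    then obtain k where k: "N \<le> k" "x = T k \<otimes>\<^bsub>SD\<^esub> h \<otimes>\<^bsub>SD\<^esub> T k" by auto
    have Tc: "T k \<in> carrier SD" using T[OF k(1)] by (simp add: centralizer_of_def)
    have "inv\<^bsub>SD\<^esub> (T k) = T k" by (rule G.inv_equality[OF TT[OF k(1)] Tc Tc])
    then have "x = (\<lambda>t. inv\<^bsub>SD\<^esub> t \<otimes>\<^bsub>SD\<^esub> h \<otimes>\<^bsub>SD\<^esub> t) (T k)" using k(2) by simp
    then show "x \<in> (\<lambda>t. inv\<^bsub>SD\<^esub> t \<otimes>\<^bsub>SD\<^esub> h \<otimes>\<^bsub>SD\<^esub> t) ` centralizer_of SD g"
      using T[OF k(1)] by blast
  qed
  then have "finite ((\<lambda>k. T k \<otimes>\<^bsub>SD\<^esub> h \<otimes>\<^bsub>SD\<^esub> T k) ` {N..})" using fin finite_subset by blast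
  then have "finite {N..}" using finite_imageD inj by blast
  then show False using infinite_Ici[of N] by simp
qed

lemma sep:
  fixes u v :: vec2
  assumes "u \<noteq> (\<lambda>i. 0)" "u \<noteq> v"
  shows "\<exists>S. finite S \<and> (\<Sum>s\<in>S. u s) = 1 \<and> (\<Sum>s\<in>S. v s) = 0"
proof (cases "\<exists>j. u j = 1 \<and> v j = 0")
  case True
  then obtain j where "u j = 1" "v j = 0" by blast
  then show ?thesis by (intro exI[of _ "{j}"]) simp
next
  case False
  obtain j where j: "u j \<noteq> v j" using assms(2) by blast
  obtain i where i: "u i \<noteq> 0" using assms(1) by blast
  have ui1: "u i = 1" using i by simp
  then have "v i \<noteq> 0" using False by blast
  then have ui: "u i = 1" "v i = 1" using ui1 by simp_all
  have uj0: "u j = 0"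
  proof (rule ccontr)
    assume "u j \<noteq> 0"
    then have "u j = 1" by simp
    then have "v j \<noteq> 0" using False by blast
    then have "v j = 1" by simp
    then show False using j \<open>u j = 1\<close> by simp
  qed
  have uj: "u j = 0" "v j = 1" using uj0 j by (simp, metis bit_not_zero_iff)
  have ij: "i \<noteq> j" using ui uj by auto
  show ?thesis by (intro exI[of _ "{i, j}"]) (simp add: ij ui uj)
qed



theorem lemma4p4:
  assumes "v \<in> Vfin" and "v \<noteq> (\<lambda>i. 0)"
  shows "fpc SD (vec_elt v) = {\<one>\<^bsub>SD\<^esub>, vec_elt v}"
proof -
  interpret G: group SD by (rule SD_group)
  let ?ve = "vec_elt v"
  have ve_c: "?ve \<in> carrier SD" using assms(1) by (simp add: vec_elt_def carrier_SD id_GL)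
  have one_in: "\<one>\<^bsub>SD\<^esub> \<in> fpc SD ?ve"
  proof -
    have "(\<lambda>t. inv\<^bsub>SD\<^esub> t \<otimes>\<^bsub>SD\<^esub> \<one>\<^bsub>SD\<^esub> \<otimes>\<^bsub>SD\<^esub> t) ` centralizer_of SD ?ve \<subseteq> {\<one>\<^bsub>SD\<^esub>}"
      by (auto simp: centralizer_of_def)
    then have "finite ((\<lambda>t. inv\<^bsub>SD\<^esub> t \<otimes>\<^bsub>SD\<^esub> \<one>\<^bsub>SD\<^esub> \<otimes>\<^bsub>SD\<^esub> t) ` centralizer_of SD ?ve)"
      using finite_subset by blast
    then show ?thesis by (simp add: fpc_def)
  qed
  have ve_in: "?ve \<in> fpc SD ?ve"
  proof -
    have "(\<lambda>t. inv\<^bsub>SD\<^esub> t \<otimes>\<^bsub>SD\<^esub> ?ve \<otimes>\<^bsub>SD\<^esub> t) ` centralizer_of SD ?ve \<subseteq> {?ve}"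
    proof
      fix x assume "x \<in> (\<lambda>t. inv\<^bsub>SD\<^esub> t \<otimes>\<^bsub>SD\<^esub> ?ve \<otimes>\<^bsub>SD\<^esub> t) ` centralizer_of SD ?ve"
      then obtain t where t: "t \<in> carrier SD" "t \<otimes>\<^bsub>SD\<^esub> ?ve = ?ve \<otimes>\<^bsub>SD\<^esub> t"
        "x = inv\<^bsub>SD\<^esub> t \<otimes>\<^bsub>SD\<^esub> ?ve \<otimes>\<^bsub>SD\<^esub> t"
        by (auto simp: centralizer_of_def)
      have "inv\<^bsub>SD\<^esub> t \<otimes>\<^bsub>SD\<^esub> ?ve \<otimes>\<^bsub>SD\<^esub> t = inv\<^bsub>SD\<^esub> t \<otimes>\<^bsub>SD\<^esub> (t \<otimes>\<^bsub>SD\<^esub> ?ve)"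
        using t ve_c by (simp add: G.m_assoc)
      also have "\<dots> = ?ve" using t(1) ve_c by (simp add: G.m_assoc[symmetric])
      finally show "x \<in> {?ve}" using t by simp
    qed
    then have "finite ((\<lambda>t. inv\<^bsub>SD\<^esub> t \<otimes>\<^bsub>SD\<^esub> ?ve \<otimes>\<^bsub>SD\<^esub> t) ` centralizer_of SD ?ve)"
      using finite_subset by blast
    then show ?thesis using ve_c by (simp add: fpc_def)
  qed
  obtain nv where nv: "vbound nv v" using assms(1) Vfin_iff by blast
  have sub: "fpc SD ?ve \<subseteq> {\<one>\<^bsub>SD\<^esub>, ?ve}"
  proof
    fix h assume hf: "h \<in> fpc SD ?ve"
    then have hc: "h \<in> carrier SD" by (simp add: fpc_def)
    obtain a u where h: "h = (a, u)" by (metis prod.exhaust)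
    have aG: "a \<in> GLinf" and uV: "u \<in> Vfin" using hc h carrier_SD by auto
    obtain na where na: "fbound na a" using aG GL_finitary finitary_iff by blast
    obtain nu where nu: "vbound nu u" using uV Vfin_iff by blast
    show "h \<in> {\<one>\<^bsub>SD\<^esub>, ?ve}"
    proof (cases "a = id_mat")
      case False
      then obtain i j where ij: "a i j \<noteq> id_mat i j" by (metis ext)
      define N where "N = Suc (max (max na nv) (max i j))"
      define T where "T k = (Emat j k, (\<lambda>i::nat. 0::bit))" for k
      have jk: "j \<noteq> k" "i \<noteq> k" "na \<le> k" "nv \<le> k" "j < k" "i < k" if "N \<le> k" for k
        using that unfolding N_def by auto
      have vk: "v k = 0" if "N \<le> k" for k using nv jk[OF that] unfolding vbound_def by auto
      have Ev: "mat_vec (Emat j k) v = v" if "N \<le> k" for k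
        using Emat_mv[OF jk(1)[OF that] nv] vk[OF that] by (intro ext) simp
      have TC: "T k \<in> centralizer_of SD ?ve" if "N \<le> k" for k
      proof -
        have Tc: "T k \<in> carrier SD" unfolding T_def
          using Emat_GL[OF jk(1)[OF that]] by (simp add: carrier_SD Vfin_zero)
        have "T k \<otimes>\<^bsub>SD\<^esub> ?ve = ?ve \<otimes>\<^bsub>SD\<^esub> T k"
          unfolding T_def vec_elt_def mult_SD
          using Ev[OF that] mm_id_right[OF Emat_fbound[OF jk(1)[OF that]]]
          by (simp add: mm_id_left mv_zero)
        then show ?thesis using Tc by (simp add: centralizer_of_def)
      qed
      have TT: "T k \<otimes>\<^bsub>SD\<^esub> T k = \<one>\<^bsub>SD\<^esub>" if "N \<le> k" for k
        unfolding T_def mult_SD one_SD using Emat_sq[OF jk(1)[OF that]] by (simp add: mv_zero)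
      have conj: "fst (T k \<otimes>\<^bsub>SD\<^esub> h \<otimes>\<^bsub>SD\<^esub> T k) i m = (if m = k then 1 else 0)"
        if "N \<le> k" "N \<le> m" for k m
      proof -
        have jk1: "j \<noteq> k" using jk[OF that(1)] by simp
        obtain n where n: "fbound n a" "fbound n (Emat j k)"
          using common_bound2[of a "Emat j k"] na Emat_fbound[OF jk1] finitary_iff by blast
        have fb: "fbound n (mat_mult (Emat j k) a)" by (rule fbound_mult[OF n(2,1)])
        have "fst (T k \<otimes>\<^bsub>SD\<^esub> h \<otimes>\<^bsub>SD\<^esub> T k) i m = mat_mult (mat_mult (Emat j k) a) (Emat j k) i m"
          unfolding T_def h mult_SD by simp
        also have "\<dots> = mat_mult (Emat j k) a i m + (if m = k then mat_mult (Emat j k) a i j else 0)"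
          by (rule Emat_right[OF jk1 fb])
        also have "\<dots> = (a i m + (if i = j then a k m else 0)) + (if m = k then a i j + (if i = j then a k j else 0) else 0)"
          by (simp add: Emat_left[OF jk1])
        also have "\<dots> = (if m = k then 1 else 0)"
        proof -
          have "na \<le> m" "i < m" using jk[OF that(2)] by auto
          then have aim: "a i m = 0" using na by (auto simp: fbound_def id_mat_def)
          have akm: "a k m = id_mat k m" using na jk[OF that(1)] by (auto simp: fbound_def)
          have akj: "a k j = 0" using na jk[OF that(1)] by (auto simp: fbound_def id_mat_def)
          show ?thesis using ij aim akm akj
            by (cases "m = k"; cases "i = j") (auto simp: id_mat_def)
        qed
        finally show ?thesis .
      qed
      have inj: "inj_on (\<lambda>k. T k \<otimes>\<^bsub>SD\<^esub> h \<otimes>\<^bsub>SD\<^esub> T k) {N..}"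
      proof (rule inj_onI)
        fix k k' assume kk: "k \<in> {N..}" "k' \<in> {N..}"
          and eq: "T k \<otimes>\<^bsub>SD\<^esub> h \<otimes>\<^bsub>SD\<^esub> T k = T k' \<otimes>\<^bsub>SD\<^esub> h \<otimes>\<^bsub>SD\<^esub> T k'"
        have "fst (T k \<otimes>\<^bsub>SD\<^esub> h \<otimes>\<^bsub>SD\<^esub> T k) i k = fst (T k' \<otimes>\<^bsub>SD\<^esub> h \<otimes>\<^bsub>SD\<^esub> T k') i k"
          using eq by simp
        then show "k = k'" using conj[of k k] conj[of k' k] kk by (auto split: if_splits)
      qed
      have "h \<notin> fpc SD ?ve" by (rule not_fpc[OF hc TC TT inj])
      then show ?thesis using hf by simp
    next
      case True
      show ?thesis
      proof (rule ccontr)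
        assume nh: "h \<notin> {\<one>\<^bsub>SD\<^esub>, ?ve}"
        have u0: "u \<noteq> (\<lambda>i. 0)" using nh h True by (auto simp: one_SD)
        have uv: "u \<noteq> v" using nh h True by (auto simp: vec_elt_def)
        obtain S where S: "finite S" "(\<Sum>s\<in>S. u s) = 1" "(\<Sum>s\<in>S. v s) = 0"
          using sep[OF u0 uv] by blast
        obtain m where m: "S \<subseteq> {..<m}" using S(1) finite_nat_bounded by blast
        define N where "N = max (max m nv) nu"
        define T where "T k = (Fmat S k, (\<lambda>i::nat. 0::bit))" for k
        have kS: "k \<notin> S" if "N \<le> k" for k using m that unfolding N_def by auto
        have Fv: "mat_vec (Fmat S k) v = v" for k
          using Fmat_mv[OF m nv] S(3) by (intro ext) simp
        have TC: "T k \<in> centralizer_of SD ?ve" if "N \<le> k" for k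
        proof -
          have Tc: "T k \<in> carrier SD" unfolding T_def
            using Fmat_GL[OF m kS[OF that]] by (simp add: carrier_SD Vfin_zero)
          have "T k \<otimes>\<^bsub>SD\<^esub> ?ve = ?ve \<otimes>\<^bsub>SD\<^esub> T k"
            unfolding T_def vec_elt_def mult_SD
            using Fv mm_id_right[OF Fmat_fbound[OF m]]
            by (simp add: mm_id_left mv_zero)
          then show ?thesis using Tc by (simp add: centralizer_of_def)
        qed
        have TT: "T k \<otimes>\<^bsub>SD\<^esub> T k = \<one>\<^bsub>SD\<^esub>" if "N \<le> k" for k
          unfolding T_def mult_SD one_SD using Fmat_sq[OF m kS[OF that]] by (simp add: mv_zero)
        have conj: "snd (T k \<otimes>\<^bsub>SD\<^esub> h \<otimes>\<^bsub>SD\<^esub> T k) p = (if p = k then 1 else 0)"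
          if "N \<le> k" "N \<le> p" for k p
        proof -
          have "snd (T k \<otimes>\<^bsub>SD\<^esub> h \<otimes>\<^bsub>SD\<^esub> T k) p = mat_vec (Fmat S k) u p"
            unfolding T_def h True mult_SD by (simp add: mv_zero)
          also have "\<dots> = u p + (if p = k then 1 else 0)" using Fmat_mv[OF m nu] S(2) by simp
          also have "u p = 0" using nu that unfolding N_def vbound_def by auto
          finally show ?thesis by simp
        qed
        have inj: "inj_on (\<lambda>k. T k \<otimes>\<^bsub>SD\<^esub> h \<otimes>\<^bsub>SD\<^esub> T k) {N..}"
        proof (rule inj_onI)
          fix k k' assume kk: "k \<in> {N..}" "k' \<in> {N..}"
            and eq: "T k \<otimes>\<^bsub>SD\<^esub> h \<otimes>\<^bsub>SD\<^esub> T k = T k' \<otimes>\<^bsub>SD\<^esub> h \<otimes>\<^bsub>SD\<^esub> T k'"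
          have "snd (T k \<otimes>\<^bsub>SD\<^esub> h \<otimes>\<^bsub>SD\<^esub> T k) k = snd (T k' \<otimes>\<^bsub>SD\<^esub> h \<otimes>\<^bsub>SD\<^esub> T k') k"
            using eq by simp
          then show "k = k'" using conj[of k k] conj[of k' k] kk by (auto split: if_splits)
        qed
        have "h \<notin> fpc SD ?ve" by (rule not_fpc[OF hc TC TT inj])
        then show False using hf by simp
      qed
    qed
  qed
  show ?thesis using sub one_in ve_in by blast
qed


end
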